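(* For $n\ge 6$ consider partitions of $n$ with parts $q_1\ge q_2\ge\dots\ge q_h$ such that $h\ge 3$, $q_j-q_{j+1}\in\{0,1\}$ for all $1\le j<h$, $q_1=q_2$, and $q_{h-1}=q_h=3$. Let $e''(n)$ (resp. $o''(n)$) be the number of such partitions with an even (resp. odd) number $h$ of parts. For an integer $t$ put $P_1(t)=\tfrac12(3t^2+t+4)$, $P_2(t)=\tfrac12(3(t+1)^2-t-1)$, $P_3(t)=\tfrac12(3(t+1)^2-t+3)$, $P_4(t)=\tfrac12(3(t+1)^2+t+1)$. Then for every integer $n\ge 6$: (a) $e''(n)=o''(n)$ if $n\notin\{P_1(t),P_2(t),P_3(t),P_4(t)\}$ for every integer $t\ge 2$; (b) $e''(n)=o''(n)-1$ if $n=P_1(t)$ or $n=P_4(t)$ for some integer $t\ge 2$; (c) $e''(n)=o''(n)+1$ if $n=P_2(t)$ or $n=P_3(t)$ for some integer $t\ge 2$. *)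

theory Defs
  imports Main
begin

definition restr_part :: "nat \<Rightarrow> nat list \<Rightarrow> bool" where
  "restr_part n q \<longleftrightarrow>
     sum_list q = n \<and> (\<forall>x\<in>set q. 0 < x) \<and> sorted_wrt (\<ge>) q \<and>
     length q \<ge> 3 \<and>
     (\<forall>j. j + 1 < length q \<longrightarrow> q ! j - q ! (j + 1) \<in> {0, 1}) \<and>
     q ! 0 = q ! 1 \<and>
     q ! (length q - 2) = 3 \<and> q ! (length q - 1) = 3"

definition e2 :: "nat \<Rightarrow> nat" where
  "e2 n = card {q. restr_part n q \<and> even (length q)}"

definition o2 :: "nat \<Rightarrow> nat" where
  "o2 n = card {q. restr_part n q \<and> odd (length q)}"

definition P1 :: "int \<Rightarrow> int" where "P1 t = (3 * t^2 + t + 4) div 2"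
definition P2 :: "int \<Rightarrow> int" where "P2 t = (3 * (t+1)^2 - t - 1) div 2"
definition P3 :: "int \<Rightarrow> int" where "P3 t = (3 * (t+1)^2 - t + 3) div 2"
definition P4 :: "int \<Rightarrow> int" where "P4 t = (3 * (t+1)^2 + t + 1) div 2"

end

theory Submission
  imports Defs "HOL-Computational_Algebra.Formal_Power_Series"
begin

definition phi :: "nat \<Rightarrow> nat set \<Rightarrow> nat list" where
  "phi h S = map (\<lambda>i. 3 + card {s\<in>S. i < s}) [0..<h]"

definition psi :: "nat list \<Rightarrow> nat set" where
  "psi q = {s. 1 \<le> s \<and> s < length q \<and> q!(s-1) \<noteq> q!s}"

lemma card_step:
  assumes "finite S"
  shows "card {s\<in>S. i < s} = card {s\<in>S. Suc i < s} + (if Suc i \<in> S then 1 else 0)"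
proof -
  have e: "{s\<in>S. i < s} = {s\<in>S. Suc i < s} \<union> ({Suc i} \<inter> S)" by auto
  have "card ({s\<in>S. Suc i < s} \<union> ({Suc i} \<inter> S)) = card {s\<in>S. Suc i < s} + card ({Suc i} \<inter> S)"
    by (rule card_Un_disjoint) (use assms in auto)
  then show ?thesis using e by (auto split: if_splits)
qed

lemma sum_card_gt:
  assumes "finite S" "S \<subseteq> {..h}"
  shows "(\<Sum>i<h. card {s\<in>S. i < s}) = \<Sum>S"
  using assms
proof (induction S rule: finite_induct)
  case empty then show ?case by simp
next
  case (insert a S)
  have c: "card {s\<in>insert a S. i < s} = card {s\<in>S. i < s} + (if i < a then 1 else 0)" for i
  proof -
    have e: "{s\<in>insert a S. i < s} = {s\<in>S. i < s} \<union> (if i < a then {a} else {})" by auto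
    have "card ({s\<in>S. i < s} \<union> (if i < a then {a} else {})) = card {s\<in>S. i < s} + card (if i < a then {a} else {} :: nat set)"
      by (rule card_Un_disjoint) (use insert in auto)
    then show ?thesis using e by simp
  qed
  have "(\<Sum>i<h. (if i < a then 1 else 0::nat)) = card {i. i < h \<and> i < a}"
    by (simp add: sum.If_cases Int_def)
  also have "{i. i < h \<and> i < a} = {..<a}" using insert by auto
  finally have ia: "(\<Sum>i<h. (if i < a then 1 else 0::nat)) = a" by simp
  show ?case using insert c ia by (simp add: sum.distrib)
qed

lemma phi_nth: "i < h \<Longrightarrow> phi h S ! i = 3 + card {s\<in>S. i < s}"
  by (simp add: phi_def)

lemma phi_len[simp]: "length (phi h S) = h" by (simp add: phi_def)

lemma phi_sum:
  assumes "finite S" "S \<subseteq> {..h}"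
  shows "sum_list (phi h S) = 3*h + \<Sum>S"
proof -
  have "sum_list (phi h S) = (\<Sum>i<h. 3 + card {s\<in>S. i < s})"
    by (simp add: phi_def sum_set_upt_conv_sum_list_nat[symmetric] lessThan_atLeast0)
  also have "\<dots> = 3*h + \<Sum>S" using sum_card_gt[OF assms] by (simp add: sum.distrib)
  finally show ?thesis .
qed

lemma phi_restr:
  assumes h: "h \<ge> 3" and S: "S \<subseteq> {2..h-2}"
  shows "restr_part (3*h + \<Sum>S) (phi h S)"
proof -
  have fin: "finite S" using S finite_subset by blast
  have S2: "S \<subseteq> {..h}" using S by (auto dest!: subsetD)
  have sorted: "sorted_wrt (\<ge>) (phi h S)"
  proof (subst sorted_wrt_iff_nth_less, intro allI impI)
    fix i j assume "i < j" "j < length (phi h S)"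
    then show "phi h S ! i \<ge> phi h S ! j"
      using fin by (auto simp: phi_nth intro!: card_mono)
  qed
  have diff: "phi h S ! j - phi h S ! (j+1) \<in> {0,1}" if "j + 1 < h" for j
    using that card_step[OF fin, of j] by (simp add: phi_nth)
  have e01: "phi h S ! 0 = phi h S ! 1"
  proof -
    have "{s\<in>S. 0 < s} = {s\<in>S. 1 < s}" using S by auto
    then show ?thesis using h by (simp add: phi_nth)
  qed
  have l2: "phi h S ! (h-2) = 3"
  proof -
    have e: "{s\<in>S. h - 2 < s} = {}" using S by auto
    have c: "card {s\<in>S. h - 2 < s} = 0" by (subst e) simp
    show ?thesis using h c by (simp add: phi_nth)
  qed
  have l1: "phi h S ! (h-1) = 3"
  proof -
    have e: "{s\<in>S. h - 1 < s} = {}" using S h by (auto dest!: subsetD)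
    have c: "card {s\<in>S. h - 1 < s} = 0" by (subst e) simp
    show ?thesis using h c by (simp add: phi_nth)
  qed
  show ?thesis unfolding restr_part_def
    using phi_sum[OF fin S2] sorted diff e01 l2 l1 h by (auto simp: phi_def)
qed

lemma psi_phi:
  assumes h: "h \<ge> 3" and S: "S \<subseteq> {2..h-2}"
  shows "psi (phi h S) = S"
proof -
  have fin: "finite S" using S finite_subset by blast
  have "s \<in> psi (phi h S) \<longleftrightarrow> s \<in> S" for s
  proof (cases "1 \<le> s \<and> s < h")
    case True
    then obtain j where j: "s = Suc j" by (cases s) auto
    then show ?thesis using True card_step[OF fin, of j] by (simp add: psi_def phi_nth)
  next
    case False
    then show ?thesis using S h by (auto simp: psi_def)
  qed
  then show ?thesis by blast
qed

lemma phi_psi: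
  assumes r: "restr_part n q"
  shows "phi (length q) (psi q) = q" and "psi q \<subseteq> {2..length q - 2}"
proof -
  let ?h = "length q"
  have h: "?h \<ge> 3" and d: "\<And>j. j + 1 < ?h \<Longrightarrow> q ! j - q ! (j + 1) \<in> {0, 1}"
    and srt: "sorted_wrt (\<ge>) q" and e01: "q ! 0 = q ! 1"
    and l2: "q ! (?h - 2) = 3" and l1: "q ! (?h - 1) = 3"
    using r unfolding restr_part_def by auto
  show sub: "psi q \<subseteq> {2..?h - 2}"
  proof
    fix s assume s: "s \<in> psi q"
    then have "1 \<le> s" "s < ?h" "q!(s-1) \<noteq> q!s" by (auto simp: psi_def)
    moreover have "s \<noteq> 1" using e01 \<open>q!(s-1) \<noteq> q!s\<close> by auto
    moreover have "s \<noteq> ?h - 1" using l1 l2 \<open>q!(s-1) \<noteq> q!s\<close> h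
      by (metis diff_diff_left one_add_one)
    ultimately show "s \<in> {2..?h - 2}" by auto
  qed
  have fin: "finite (psi q)" by (rule finite_subset[OF sub]) auto
  have step: "q ! j = q ! (Suc j) + (if Suc j \<in> psi q then 1 else 0)" if "Suc j < ?h" for j
  proof -
    have ge: "q ! j \<ge> q ! Suc j" using srt that by (simp add: sorted_wrt_iff_nth_less)
    have "q ! j - q ! (j + 1) \<in> {0, 1}" using d that by simp
    moreover have "Suc j \<in> psi q \<longleftrightarrow> q ! j \<noteq> q ! Suc j" using that by (simp add: psi_def)
    ultimately show ?thesis using ge by auto
  qed
  have main: "q ! (?h - 1 - k) = 3 + card {s\<in>psi q. ?h - 1 - k < s}" if "k < ?h" for k
    using that
  proof (induction k)
    case 0
    have e: "{s\<in>psi q. ?h - 1 < s} = {}" using sub by (auto dest!: subsetD)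
    have c: "card {s\<in>psi q. ?h - 1 < s} = 0" by (subst e) simp
    show ?case using l1 c by simp
  next
    case (Suc k)
    have e: "?h - 1 - k = Suc (?h - 1 - Suc k)" using Suc.prems by simp
    have "q ! (?h - 1 - Suc k) = q ! Suc (?h - 1 - Suc k) + (if Suc (?h - 1 - Suc k) \<in> psi q then 1 else 0)"
      by (rule step) (use Suc.prems in simp)
    also have "q ! Suc (?h - 1 - Suc k) = 3 + card {s\<in>psi q. Suc (?h - 1 - Suc k) < s}"
      using Suc.IH Suc.prems e by simp
    finally show ?case using card_step[OF fin, of "?h - 1 - Suc k"] by simp
  qed
  show "phi ?h (psi q) = q"
  proof (rule nth_equalityI)
    show "length (phi ?h (psi q)) = ?h" by simp
    fix i assume "i < length (phi ?h (psi q))"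
    then have i: "i < ?h" by simp
    have "q ! i = 3 + card {s\<in>psi q. i < s}" using main[of "?h - 1 - i"] i by simp
    then show "phi ?h (psi q) ! i = q ! i" using i by (simp add: phi_nth)
  qed
qed

lemma restr_bij:
  assumes h: "h \<ge> 3"
  shows "bij_betw (phi h) {S. S \<subseteq> {2..h-2} \<and> 3*h + \<Sum>S = n} {q. restr_part n q \<and> length q = h}"
proof (rule bij_betw_byWitness[where f'=psi])
  show "\<forall>S\<in>{S. S \<subseteq> {2..h-2} \<and> 3*h + \<Sum>S = n}. psi (phi h S) = S"
    using psi_phi h by auto
  show "\<forall>q\<in>{q. restr_part n q \<and> length q = h}. phi h (psi q) = q"
    using phi_psi by auto
  show "phi h ` {S. S \<subseteq> {2..h-2} \<and> 3*h + \<Sum>S = n} \<subseteq> {q. restr_part n q \<and> length q = h}"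
    using phi_restr h by auto
  show "psi ` {q. restr_part n q \<and> length q = h} \<subseteq> {S. S \<subseteq> {2..h-2} \<and> 3*h + \<Sum>S = n}"
  proof (rule image_subsetI, simp, elim conjE)
    fix q assume r: "restr_part n q" and hq: "length q = h"
    show "psi q \<subseteq> {2..h - 2} \<and> 3 * h + \<Sum>(psi q) = n"
    proof
    show "psi q \<subseteq> {2..h - 2}" using phi_psi(2)[OF r] hq by simp
    have "restr_part (3 * length q + \<Sum>(psi q)) (phi (length q) (psi q))"
      using phi_restr[OF _ phi_psi(2)[OF r]] r h hq by auto
    then have "restr_part (3 * length q + \<Sum>(psi q)) q" using phi_psi(1)[OF r] by simp
    then show "3 * h + \<Sum>(psi q) = n" using r hq by (simp add: restr_part_def)
  qed
  qed
qed

definition Pr :: "nat set \<Rightarrow> int fps" where "Pr K = (\<Prod>k\<in>K. 1 + fps_X^k)"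

lemma Pr_coeff:
  assumes "finite K"
  shows "fps_nth (Pr K) r = int (card {S. S \<subseteq> K \<and> \<Sum>S = r})"
  using assms
proof (induction K arbitrary: r rule: finite_induct)
  case empty
  have "{S. S \<subseteq> {} \<and> \<Sum>S = r} = (if r = 0 then {{}} else {})" by auto
  then show ?case by (simp add: Pr_def)
next
  case (insert a K)
  have fK: "finite {S. S \<subseteq> K \<and> P S}" for P using insert(1) by simp
  have "Pr (insert a K) = Pr K + fps_X^a * Pr K" using insert by (simp add: Pr_def algebra_simps)
  then have "fps_nth (Pr (insert a K)) r = fps_nth (Pr K) r + (if r < a then 0 else fps_nth (Pr K) (r - a))"
    by (simp add: fps_X_power_mult_nth)
  also have "\<dots> = int (card {S. S \<subseteq> K \<and> \<Sum>S = r}) + (if r < a then 0 else int (card {S. S \<subseteq> K \<and> \<Sum>S = r - a}))"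
    using insert.IH by simp
  also have "\<dots> = int (card {S. S \<subseteq> insert a K \<and> \<Sum>S = r})"
  proof -
    let ?A = "{S. S \<subseteq> K \<and> \<Sum>S = r}"
    let ?B = "{S. S \<subseteq> insert a K \<and> a \<in> S \<and> \<Sum>S = r}"
    have un: "{S. S \<subseteq> insert a K \<and> \<Sum>S = r} = ?A \<union> ?B" using insert by auto
    have dj: "?A \<inter> ?B = {}" using insert by auto
    have fB: "finite ?B" by (rule finite_subset[of _ "Pow (insert a K)"]) (use insert in auto)
    have cB: "card ?B = (if r < a then 0 else card {S. S \<subseteq> K \<and> \<Sum>S = r - a})"
    proof (cases "r < a")
      case True
      have "False" if S: "S \<subseteq> insert a K" "a \<in> S" "\<Sum>S = r" for S
      proof -
        have "finite S" using S insert finite_subset by blast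
        then have "a \<le> \<Sum>S" using S member_le_sum[of a S id] by simp
        then show False using S True by simp
      qed
      then have e: "?B = {}" by blast
      show ?thesis using True by (subst e) simp
    next
      case False
      have "bij_betw (insert a) {S. S \<subseteq> K \<and> \<Sum>S = r - a} ?B"
      proof (rule bij_betw_byWitness[where f' = "\<lambda>S. S - {a}"])
        show "\<forall>S\<in>{S. S \<subseteq> K \<and> \<Sum>S = r - a}. insert a S - {a} = S" using insert by auto
        show "\<forall>S\<in>?B. insert a (S - {a}) = S" by auto
        show "insert a ` {S. S \<subseteq> K \<and> \<Sum>S = r - a} \<subseteq> ?B"
        proof clarify
          fix S assume S: "S \<subseteq> K" "\<Sum>S = r - a"
          have "finite S" using S insert finite_subset by blast
          moreover have "a \<notin> S" using S insert by auto
          ultimately show "insert a S \<subseteq> insert a K \<and> a \<in> insert a S \<and> \<Sum>(insert a S) = r"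
            using S False by (simp add: subset_insertI2)
        qed
        show "(\<lambda>S. S - {a}) ` ?B \<subseteq> {S. S \<subseteq> K \<and> \<Sum>S = r - a}"
        proof clarify
          fix S assume S: "S \<subseteq> insert a K" "a \<in> S" "r = \<Sum>S"
          have "finite S" using S insert finite_subset by blast
          then have "\<Sum>S = a + \<Sum>(S - {a})" using S(2) by (rule sum.remove)
          then show "S - {a} \<subseteq> K \<and> \<Sum>(S - {a}) = \<Sum>S - a" using S by auto
        qed
      qed
      then show ?thesis using False bij_betw_same_card by fastforce
    qed
    have "card (?A \<union> ?B) = card ?A + card ?B" by (rule card_Un_disjoint) (use fK fB dj in auto)
    then show ?thesis using un cB by simp
  qed
  finally show ?case .
qed

lemma card_h:
  assumes "h \<ge> 3"
  shows "int (card {q. restr_part n q \<and> length q = h}) = fps_nth (fps_X^(3*h) * Pr {2..h-2}) n"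
proof -
  have "card {q. restr_part n q \<and> length q = h} = card {S. S \<subseteq> {2..h-2} \<and> 3*h + \<Sum>S = n}"
    using bij_betw_same_card[OF restr_bij[OF assms]] by simp
  also have "{S. S \<subseteq> {2..h-2} \<and> 3*h + \<Sum>S = n} = (if n < 3*h then {} else {S. S \<subseteq> {2..h-2} \<and> \<Sum>S = n - 3*h})"
    by auto
  finally show ?thesis by (simp add: fps_X_power_mult_nth Pr_coeff)
qed

lemma len_le_sum: "(\<forall>x\<in>set q. 0 < (x::nat)) \<Longrightarrow> length q \<le> sum_list q"
  by (induction q) auto

lemma fin_h: "h \<ge> 3 \<Longrightarrow> finite {q. restr_part n q \<and> length q = h}"
proof -
  assume h: "h \<ge> 3"
  have "finite {S. S \<subseteq> {2..h-2} \<and> 3*h + \<Sum>S = n}"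
    by (rule finite_subset[of _ "Pow {2..h-2}"]) auto
  then show ?thesis using bij_betw_finite[OF restr_bij[OF h]] by simp
qed

lemma card_par:
  assumes K: "n < K"
  shows "card {q. restr_part n q \<and> P (length q)} = (\<Sum>h\<in>{h\<in>{3..<K}. P h}. card {q. restr_part n q \<and> length q = h})"
proof -
  have e: "{q. restr_part n q \<and> P (length q)} = (\<Union>h\<in>{h\<in>{3..<K}. P h}. {q. restr_part n q \<and> length q = h})"
  proof safe
    fix q assume r: "restr_part n q" "P (length q)"
    have "length q \<le> n" using len_le_sum[of q] r by (auto simp: restr_part_def)
    then show "q \<in> (\<Union>h\<in>{h\<in>{3..<K}. P h}. {q. restr_part n q \<and> length q = h})"
      using r K by (auto simp: restr_part_def)
  qed
  show ?thesis unfolding e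
    by (rule card_UN_disjoint) (auto intro: fin_h)
qed

definition G :: "nat \<Rightarrow> int fps" where
  "G K = (\<Sum>h\<in>{3..<K}. fps_const ((-1)^h) * (fps_X^(3*h) * Pr {2..h-2}))"

lemma D_G:
  assumes K: "n < K"
  shows "int (e2 n) - int (o2 n) = fps_nth (G K) n"
proof -
  let ?c = "\<lambda>h. int (card {q. restr_part n q \<and> length q = h})"
  have "fps_nth (G K) n = (\<Sum>h\<in>{3..<K}. (-1)^h * ?c h)"
    unfolding G_def fps_sum_nth by (intro sum.cong refl) (simp add: card_h)
  also have "\<dots> = (\<Sum>h\<in>{3..<K}. if even h then ?c h else - ?c h)"
    by (intro sum.cong refl) simp
  also have "\<dots> = (\<Sum>h\<in>{h\<in>{3..<K}. even h}. ?c h) - (\<Sum>h\<in>{h\<in>{3..<K}. odd h}. ?c h)"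
    by (simp add: sum.If_cases sum_negf Int_def Collect_conj_eq[symmetric])
  also have "\<dots> = int (e2 n) - int (o2 n)"
    unfolding e2_def o2_def card_par[OF K, of even] card_par[OF K, of odd] by simp
  finally show ?thesis by simp
qed

fun A :: "nat \<Rightarrow> nat" where
  "A 0 = 5"
| "A (Suc i) = A i + 3*i + 7"

definition Psi :: "nat \<Rightarrow> nat \<Rightarrow> int fps" where
  "Psi i N = (\<Sum>j<N. fps_const ((-1)^j) * (fps_X^(A i + (i+2)*j) * ((1 + fps_X^2) * Pr {i+2..i+1+j})))"

definition corr :: "nat \<Rightarrow> int fps" where
  "corr i = (1 + fps_X^2) * (fps_X^(A i) - fps_X^(A i + i + 2))"

definition err :: "nat \<Rightarrow> nat \<Rightarrow> int fps" where
  "err i M = fps_const ((-1)^(M+1)) * (fps_X^(A i + (i+2)*(M+2)) * ((1 + fps_X^2) * Pr {i+3..i+M+2}))"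

lemma Pr_top: "a \<le> Suc b \<Longrightarrow> Pr {a..Suc b} = (1 + fps_X^(Suc b)) * Pr {a..b}"
  by (simp add: Pr_def prod.cl_ivl_Suc)

lemma Pr_bot: "a \<le> b \<Longrightarrow> Pr {a..b} = (1 + fps_X^a) * Pr {Suc a..b}"
  by (simp add: Pr_def prod.atLeast_Suc_atMost)

lemma Pr_empty: "b < a \<Longrightarrow> Pr {a..b} = 1"
  by (simp add: Pr_def)

lemma Pr_emp[simp]: "Pr {} = 1" by (simp add: Pr_def)

lemma fps_const_m1[simp]: "fps_const (-1::int) = -1"
  by (simp add: fps_const_neg[symmetric])

lemma Psi_Suc: "Psi i (Suc N) = Psi i N + fps_const ((-1)^N) * (fps_X^(A i + (i+2)*N) * ((1 + fps_X^2) * Pr {i+2..i+1+N}))"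
  unfolding Psi_def by (rule sum.lessThan_Suc)

lemma main_step: "Psi i (M+2) = corr i + Psi (Suc i) M + err i M"
proof (induction M)
  case 0
  let ?X = "fps_X :: int fps"
  define Z where "Z = ?X^(A i)"
  define u where "u = ?X^(i+2)"
  have p1: "Pr {i+2..i+1+1} = 1 + u"
    using Pr_top[of "i+2" "i+1"] Pr_empty[of "i+1" "i+2"] by (simp add: u_def)
  have z1: "?X^(A i + (i+2)*1) = Z*u" by (simp add: Z_def u_def power_add)
  have z2: "?X^(A i + (i+2)*2) = Z*u*u"
  proof -
    have "A i + (i+2)*2 = A i + (i+2) + (i+2)" by simp
    then show ?thesis by (simp only: Z_def u_def power_add)
  qed
  have z0: "?X^(A i + i + 2) = Z*u" by (simp add: Z_def u_def power_add[symmetric] add.assoc)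
  have "Psi i 2 = fps_const ((-1)^0) * (?X^(A i + (i+2)*0) * ((1 + ?X^2) * Pr {i+2..i+1+0}))
     + fps_const ((-1)^1) * (?X^(A i + (i+2)*1) * ((1 + ?X^2) * Pr {i+2..i+1+1}))"
    unfolding Psi_def by (simp add: numeral_2_eq_2)
  also have "\<dots> = Z * (1 + ?X^2) - Z*u * ((1 + ?X^2) * (1 + u))"
    using p1 z1 by (simp add: Z_def)
  finally have P2: "Psi i 2 = Z * (1 + ?X^2) - Z*u * ((1 + ?X^2) * (1 + u))" .
  have pe: "Pr {i+3..i+2} = 1" by (rule Pr_empty) simp
  have "err i 0 = fps_const ((-1)^1) * (?X^(A i + (i+2)*2) * ((1 + ?X^2) * Pr {i+3..i+2}))"
    unfolding err_def by simp
  also have "\<dots> = - (Z*u*u * ((1 + ?X^2)))" unfolding z2 pe by simp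
  finally have E: "err i 0 = - (Z*u*u * ((1 + ?X^2)))" .
  have C: "corr i = (1 + ?X^2) * (Z - Z*u)" unfolding corr_def using z0 by (simp add: Z_def)
  have P0: "Psi (Suc i) 0 = 0" by (simp add: Psi_def)
  show ?case unfolding add_0 P2 E C P0 by (simp add: algebra_simps)
next
  case (Suc M)
  let ?X = "fps_X :: int fps"
  define s where "s = fps_const ((-1::int)^M)"
  define Y where "Y = ?X^(A i + (i+2)*(M+2))"
  define R where "R = Pr {i+3..i+M+2}"
  define u where "u = ?X^(i+2)"
  define v where "v = ?X^(i+M+3)"
  have vv: "?X^(Suc (i+M+2)) = v" unfolding v_def by (rule arg_cong[where f="\<lambda>k. ?X^k"]) simp
  have F1: "Pr {i+2..i+1+(M+2)} = (1+u)*((1+v)*R)"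
  proof -
    have "Pr {i+2..i+1+(M+2)} = Pr {i+2..Suc (i+M+2)}" by (simp add: algebra_simps)
    also have "\<dots> = (1 + ?X^(Suc (i+M+2))) * Pr {i+2..i+M+2}" by (rule Pr_top) simp
    also have "Pr {i+2..i+M+2} = (1 + ?X^(i+2)) * Pr {Suc (i+2)..i+M+2}" by (rule Pr_bot) simp
    also have "Pr {Suc (i+2)..i+M+2} = R" unfolding R_def by (rule arg_cong[where f=Pr]) auto
    finally show ?thesis unfolding vv u_def by (simp add: algebra_simps)
  qed
  have F2: "Pr {i+3..i+(M+1)+2} = (1+v)*R"
  proof -
    have "Pr {i+3..i+(M+1)+2} = Pr {i+3..Suc (i+M+2)}" by (simp add: algebra_simps)
    also have "\<dots> = (1 + ?X^(Suc (i+M+2))) * Pr {i+3..i+M+2}" by (rule Pr_top) simp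
    finally show ?thesis unfolding vv R_def .
  qed
  have F3: "?X^(A (Suc i) + (Suc i + 2)*M) = Y * v"
  proof -
    have "A (Suc i) + (Suc i + 2)*M = (A i + (i+2)*(M+2)) + (i+M+3)" by (simp add: algebra_simps)
    then show ?thesis by (simp only: Y_def v_def power_add)
  qed
  have F4: "?X^(A i + (i+2)*((M+1)+2)) = Y * u"
  proof -
    have "A i + (i+2)*((M+1)+2) = (A i + (i+2)*(M+2)) + (i+2)" by (simp add: algebra_simps)
    then show ?thesis by (simp only: Y_def u_def power_add)
  qed
  have R2: "Pr {Suc i+2..Suc i+1+M} = R"
  proof -
    have "{Suc i+2..Suc i+1+M} = {i+3..i+M+2}" by auto
    then show ?thesis by (simp only: R_def)
  qed
  have s1: "fps_const ((-1::int)^(M+2)) = s" by (simp add: s_def)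
  have s2: "fps_const ((-1::int)^(M+1)) = - s" by (simp add: s_def fps_const_neg)
  have s3: "fps_const ((-1::int)^(M+1+1)) = s" by (simp add: s_def)
  have L: "Psi i (Suc M + 2) = Psi i (M+2) + s * (Y * ((1 + ?X^2) * ((1+u)*((1+v)*R))))"
  proof -
    have "Psi i (Suc M + 2) = Psi i (Suc (M+2))" by simp
    also have "\<dots> = Psi i (M+2) + fps_const ((-1)^(M+2)) * (?X^(A i + (i+2)*(M+2)) * ((1 + ?X^2) * Pr {i+2..i+1+(M+2)}))"
      by (rule Psi_Suc)
    finally show ?thesis unfolding s1 F1 Y_def .
  qed
  have Rr: "Psi (Suc i) (Suc M) = Psi (Suc i) M + s * ((Y*v) * ((1 + ?X^2) * R))"
    unfolding Psi_Suc F3 R2 s_def ..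
  have E0: "err i M = - s * (Y * ((1 + ?X^2) * R))"
    unfolding err_def s2 Y_def R_def by simp
  have E1: "err i (Suc M) = s * ((Y*u) * ((1 + ?X^2) * ((1+v)*R)))"
  proof -
    have "err i (Suc M) = fps_const ((-1)^(M+1+1)) * (?X^(A i + (i+2)*((M+1)+2)) * ((1 + ?X^2) * Pr {i+3..i+(M+1)+2}))"
      unfolding err_def by simp
    then show ?thesis unfolding s3 F4 F2 .
  qed
  show ?case unfolding L Rr E1 Suc.IH E0 by (simp add: algebra_simps)
qed

lemma A_ge: "A i \<ge> 7*i + 5"
  by (induction i) auto

lemma err_nth: "n < A i + (i+2)*(M+2) \<Longrightarrow> fps_nth (err i M) n = 0"
  unfolding err_def fps_mult_left_const_nth fps_X_power_mult_nth by simp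

lemma iter: "n < 2*L + 7*i + 5 \<Longrightarrow> fps_nth (Psi i (2*L)) n = fps_nth (\<Sum>k<L. corr (i+k)) n"
proof (induction L arbitrary: i)
  case 0
  then show ?case by (simp add: Psi_def)
next
  case (Suc L)
  have "Psi i (2 * Suc L) = corr i + Psi (Suc i) (2*L) + err i (2*L)"
    using main_step[of i "2*L"] by (simp add: add.commute)
  moreover have "fps_nth (err i (2*L)) n = 0"
  proof (rule err_nth)
    have m: "(i+2)*(2*L+2) \<ge> 2*(2*L+2)" by (intro mult_right_mono) auto
    have "A i + (i+2)*(2*L+2) \<ge> (7*i+5) + 2*(2*L+2)" by (rule add_mono[OF A_ge m])
    moreover have "n < 2*L + 7*i + 7" using Suc.prems by simp
    ultimately show "n < A i + (i+2)*(2*L+2)" by (simp add: algebra_simps)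
  qed
  moreover have "fps_nth (Psi (Suc i) (2*L)) n = fps_nth (\<Sum>k<L. corr (Suc i+k)) n"
    using Suc.IH[of "Suc i"] Suc.prems by simp
  moreover have "(\<Sum>k<Suc L. corr (i+k)) = corr i + (\<Sum>k<L. corr (Suc i+k))"
    unfolding sum.lessThan_Suc_shift by simp
  ultimately show ?case by (simp add: fps_add_nth)
qed

lemma G_Psi: "G (4+N) = Psi 1 N - fps_X ^ 9"
proof (induction N)
  case 0
  have "G 4 = fps_const ((-1)^3) * (fps_X^(3*3) * Pr {2..3-2})" by (simp add: G_def numeral_eq_Suc)
  then show ?case by (simp add: Psi_def Pr_empty)
next
  case (Suc N)
  define T where "T = fps_const ((-1::int)^N) * (fps_X^(A 1 + (1+2)*N) * ((1 + fps_X^2) * Pr {1+2..1+1+N}))"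
  have "G (4 + Suc N) = G (4+N) + fps_const ((-1)^(4+N)) * (fps_X^(3*(4+N)) * Pr {2..(4+N)-2})"
    unfolding G_def add_Suc_right by (subst sum.atLeastLessThan_Suc) (simp_all add: add.commute)
  also have "Pr {2..(4+N)-2} = (1 + fps_X^2) * Pr {1+2..1+1+N}"
    using Pr_bot[of 2 "2+N"] by (simp add: numeral_eq_Suc)
  also have "fps_X^(3*(4+N)) = (fps_X^(A 1 + (1+2)*N) :: int fps)"
    by (simp add: numeral_eq_Suc algebra_simps)
  also have "fps_const ((-1::int)^(4+N)) = fps_const ((-1)^N)" by (simp add: power_add)
  finally have g: "G (4 + Suc N) = G (4+N) + T" unfolding T_def .
  have p: "Psi 1 (Suc N) = Psi 1 N + T" unfolding T_def by (rule Psi_Suc)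
  show ?case unfolding g p Suc.IH by simp
qed

definition f :: "nat \<Rightarrow> nat \<Rightarrow> int" where
  "f i n = (if n = A i then 1 else 0) + (if n = A i + 2 then 1 else 0)
         - (if n = A i + i + 2 then 1 else 0) - (if n = A i + i + 4 then 1 else 0)"

lemma corr_nth: "fps_nth (corr i) n = f i n"
proof -
  have g: "(1 + x^2) * (z - w) = z + z * x^2 - w - w * x^2" for x z w :: "int fps"
    by (simp add: algebra_simps)
  have "corr i = fps_X^(A i) + fps_X^(A i + 2) - fps_X^(A i + i + 2) - fps_X^(A i + i + 2 + 2)"
    unfolding corr_def g power_add[of fps_X "A i" 2] power_add[of fps_X "A i + i + 2" 2] ..
  then have "fps_nth (corr i) n = fps_nth (fps_X^(A i) + fps_X^(A i + 2) - fps_X^(A i + i + 2) - fps_X^(A i + i + 2 + 2)) n" by (rule arg_cong)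
  then show ?thesis unfolding f_def fps_sub_nth fps_add_nth fps_X_power_nth by simp
qed

lemma D_formula:
  "int (e2 n) - int (o2 n) = (\<Sum>k<n. f (Suc k) n) - (if n = 9 then 1 else 0)"
proof -
  have "int (e2 n) - int (o2 n) = fps_nth (G (4 + 2*n)) n" by (rule D_G) simp
  also have "G (4 + 2*n) = Psi 1 (2*n) - fps_X^9" by (rule G_Psi)
  also have "fps_nth (Psi 1 (2*n) - fps_X^9) n = fps_nth (Psi 1 (2*n)) n - (if n = 9 then 1 else 0)"
    unfolding fps_sub_nth fps_X_power_nth ..
  also have "fps_nth (Psi 1 (2*n)) n = fps_nth (\<Sum>k<n. corr (1+k)) n" by (rule iter) simp
  also have "\<dots> = (\<Sum>k<n. f (Suc k) n)" unfolding fps_sum_nth corr_nth by simp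
  finally show ?thesis .
qed

lemma A_mono: "i < j \<Longrightarrow> A i + i + 4 < A j"
proof (induction j)
  case 0 then show ?case by simp
next
  case (Suc j)
  show ?case
  proof (cases "i = j")
    case True then show ?thesis by simp
  next
    case False then have "i < j" using Suc.prems by simp
    then show ?thesis using Suc.IH by simp
  qed
qed

definition vals :: "nat \<Rightarrow> nat set" where
  "vals i = {A i, A i + 2, A i + i + 2, A i + i + 4}"

lemma f_zero: "n \<notin> vals i \<Longrightarrow> f i n = 0"
  by (simp add: f_def vals_def)

lemma vals_disj: "i \<noteq> j \<Longrightarrow> n \<in> vals j \<Longrightarrow> n \<notin> vals i"
proof (cases "i < j")
  case True
  assume "n \<in> vals j"
  then have "n \<ge> A j" by (auto simp: vals_def)
  moreover have "\<forall>m\<in>vals i. m < A j" using A_mono[OF True] by (auto simp: vals_def)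
  ultimately show ?thesis by auto
next
  case False
  assume "i \<noteq> j" "n \<in> vals j"
  then have ji: "j < i" using False by simp
  have "n \<le> A j + j + 4" using \<open>n \<in> vals j\<close> by (auto simp: vals_def)
  moreover have "\<forall>m\<in>vals i. A i \<le> m" by (auto simp: vals_def)
  ultimately show ?thesis using A_mono[OF ji] by fastforce
qed

lemma vals_ge: "i \<ge> 1 \<Longrightarrow> n \<in> vals i \<Longrightarrow> n \<ge> 12 \<and> i < n"
proof -
  assume i: "i \<ge> 1" and n: "n \<in> vals i"
  have "A i \<ge> 7*i + 5" by (rule A_ge)
  then have "A i \<ge> 12" "A i > i" using i by auto
  then show ?thesis using n by (auto simp: vals_def)
qed

lemma D_none:
  assumes "n \<noteq> 9" "\<And>i. i \<ge> 1 \<Longrightarrow> n \<notin> vals i"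
  shows "int (e2 n) - int (o2 n) = 0"
  unfolding D_formula using assms f_zero by simp

lemma D_single:
  assumes j: "j \<ge> 1" and n: "n \<in> vals j"
  shows "int (e2 n) - int (o2 n) = f j n"
proof -
  have n9: "n \<noteq> 9" using vals_ge[OF j n] by simp
  have jn: "j - 1 \<in> {..<n}" using vals_ge[OF j n] by auto
  have "(\<Sum>k<n. f (Suc k) n) = f (Suc (j-1)) n + (\<Sum>k\<in>{..<n} - {j-1}. f (Suc k) n)"
    by (rule sum.remove[OF _ jn]) simp
  also have "(\<Sum>k\<in>{..<n} - {j-1}. f (Suc k) n) = 0"
  proof (rule sum.neutral, rule ballI)
    fix k assume "k \<in> {..<n} - {j-1}"
    then have "Suc k \<noteq> j" using j by auto
    then show "f (Suc k) n = 0" using vals_disj[OF _ n] f_zero by blast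
  qed
  finally show ?thesis unfolding D_formula using n9 j by simp
qed

lemma A_closed: "2 * A j = 3*j^2 + 11*j + 10"
  by (induction j) (simp_all add: power2_eq_square algebra_simps)

lemma A_closed_int: "2 * int (A j) = 3*(int j)^2 + 11*int j + 10"
proof -
  have "int (2 * A j) = int (3*j^2 + 11*j + 10)" by (simp only: A_closed)
  then show ?thesis by simp
qed

lemma P2A: "P2 (int j + 1) = int (A j)"
proof -
  have "3 * (int j + 1 + 1)^2 - (int j + 1) - 1 = 2 * int (A j)"
    using A_closed_int[of j] by (simp add: power2_eq_square algebra_simps)
  then show ?thesis unfolding P2_def by simp
qed

lemma P3A: "P3 (int j + 1) = int (A j + 2)"
proof -
  have "3 * (int j + 1 + 1)^2 - (int j + 1) + 3 = 2 * int (A j + 2)"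
    using A_closed_int[of j] by (simp add: power2_eq_square algebra_simps)
  then show ?thesis unfolding P3_def by simp
qed

lemma P4A: "P4 (int j + 1) = int (A j + j + 2)"
proof -
  have "3 * (int j + 1 + 1)^2 + (int j + 1) + 1 = 2 * int (A j + j + 2)"
    using A_closed_int[of j] by (simp add: power2_eq_square algebra_simps)
  then show ?thesis unfolding P4_def by simp
qed

lemma P1A: "P1 (int j + 2) = int (A j + j + 4)"
proof -
  have "3 * (int j + 2)^2 + (int j + 2) + 4 = 2 * int (A j + j + 4)"
    using A_closed_int[of j] by (simp add: power2_eq_square algebra_simps)
  then show ?thesis unfolding P1_def by simp
qed

lemma P1_2: "P1 2 = 9" by (simp add: P1_def)

lemma t_split1: "t \<ge> (2::int) \<Longrightarrow> \<exists>j. j \<ge> 1 \<and> t = int j + 1"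
  by (rule exI[of _ "nat (t - 1)"]) simp

lemma t_split2: "t \<ge> (3::int) \<Longrightarrow> \<exists>j. j \<ge> 1 \<and> t = int j + 2"
  by (rule exI[of _ "nat (t - 2)"]) simp

theorem corollary4p10:
  fixes n :: nat
  assumes "n \<ge> 6"
  shows "((\<forall>t::int. t \<ge> 2 \<longrightarrow> int n \<notin> {P1 t, P2 t, P3 t, P4 t})
            \<longrightarrow> int (e2 n) = int (o2 n))
       \<and> ((\<exists>t::int. t \<ge> 2 \<and> (int n = P1 t \<or> int n = P4 t))
            \<longrightarrow> int (e2 n) = int (o2 n) - 1)
       \<and> ((\<exists>t::int. t \<ge> 2 \<and> (int n = P2 t \<or> int n = P3 t))
            \<longrightarrow> int (e2 n) = int (o2 n) + 1)"
proof (intro conjI impI)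
  assume H: "\<forall>t::int. t \<ge> 2 \<longrightarrow> int n \<notin> {P1 t, P2 t, P3 t, P4 t}"
  have "n \<noteq> 9" using H[rule_format, of 2] P1_2 by auto
  moreover have "n \<notin> vals i" if i: "i \<ge> 1" for i
  proof
    assume "n \<in> vals i"
    moreover have "int i + 1 \<ge> 2" "int i + 2 \<ge> 2" using i by auto
    ultimately show False
      using H[rule_format, of "int i + 1"] H[rule_format, of "int i + 2"] P1A[of i] P2A[of i] P3A[of i] P4A[of i]
      by (auto simp: vals_def)
  qed
  ultimately have "int (e2 n) - int (o2 n) = 0" by (rule D_none)
  then show "int (e2 n) = int (o2 n)" by simp
next
  assume "\<exists>t::int. t \<ge> 2 \<and> (int n = P1 t \<or> int n = P4 t)"
  then obtain t :: int where t: "t \<ge> 2" and tn: "int n = P1 t \<or> int n = P4 t" by blast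
  have "int (e2 n) - int (o2 n) = -1"
  proof (cases "int n = P1 t")
    case True
    show ?thesis
    proof (cases "t = 2")
      case t2: True
      then have n9: "n = 9" using True P1_2 by simp
      have "f (Suc k) n = 0" for k
        by (rule f_zero) (use vals_ge[of "Suc k" n] n9 in auto)
      then show ?thesis unfolding D_formula using n9 by simp
    next
      case False
      have "t \<ge> 3" using False t by simp
      then obtain j where j: "j \<ge> 1" "t = int j + 2" using t_split2 by blast
      then have n: "n = A j + j + 4" using True P1A[of j] by simp
      then have "n \<in> vals j" by (simp add: vals_def)
      then have "int (e2 n) - int (o2 n) = f j n" by (rule D_single[OF j(1)])
      then show ?thesis using n by (simp add: f_def)
    qed
  next
    case False
    then have P4: "int n = P4 t" using tn by simp
    obtain j where j: "j \<ge> 1" "t = int j + 1" using t_split1 t by blast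
    then have n: "n = A j + j + 2" using P4 P4A[of j] by simp
    then have "n \<in> vals j" by (simp add: vals_def)
    then have "int (e2 n) - int (o2 n) = f j n" by (rule D_single[OF j(1)])
    then show ?thesis using n j by (simp add: f_def)
  qed
  then show "int (e2 n) = int (o2 n) - 1" by simp
next
  assume "\<exists>t::int. t \<ge> 2 \<and> (int n = P2 t \<or> int n = P3 t)"
  then obtain t :: int where t: "t \<ge> 2" and tn: "int n = P2 t \<or> int n = P3 t" by blast
  obtain j where j: "j \<ge> 1" "t = int j + 1" using t_split1 t by blast
  have "int (e2 n) - int (o2 n) = 1"
  proof (cases "int n = P2 t")
    case True
    then have n: "n = A j" using j P2A[of j] by simp
    then have "n \<in> vals j" by (simp add: vals_def)
    then have "int (e2 n) - int (o2 n) = f j n" by (rule D_single[OF j(1)])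
    then show ?thesis using n j by (simp add: f_def)
  next
    case False
    then have n: "n = A j + 2" using tn j P3A[of j] by simp
    then have "n \<in> vals j" by (simp add: vals_def)
    then have "int (e2 n) - int (o2 n) = f j n" by (rule D_single[OF j(1)])
    then show ?thesis using n j by (simp add: f_def)
  qed
  then show "int (e2 n) = int (o2 n) + 1" by simp
qed

end
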